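(* Let $T=\bigoplus_p T_p$ be a torsion abelian group with every $T_p$ finite, and let $G$ be a pure subgroup of $\prod_p T_p$ containing $T$ such that $G/T$ is divisible (so $T$ is the torsion subgroup of $G$). Let $\gamma:G\to G$ be any endomorphism and $X=\gamma(G)$, with torsion subgroup $T_X$. Then $T_X=\gamma(T)$ and $X/T_X$ is divisible.
   Context: All groups are abelian; $T_p$ is the $p$-primary component of $T$, and $T=\bigoplus_p T_p$ is identified with its natural image in $\prod_p T_p$. *)

theory Defs
  imports "HOL-Algebra.Algebra" "HOL-Computational_Algebra.Primes"
begin

definition divisible_group :: "('a, 'b) monoid_scheme \<Rightarrow> bool" where
  "divisible_group H \<longleftrightarrow>
     (\<forall>x\<in>carrier H. \<forall>n::nat. n > 0 \<longrightarrow> (\<exists>y\<in>carrier H. y [^]\<^bsub>H\<^esub> n = x))"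

definition torsion_part :: "('a, 'b) monoid_scheme \<Rightarrow> 'a set \<Rightarrow> 'a set" where
  "torsion_part H S = {x\<in>S. \<exists>n::nat. n > 0 \<and> x [^]\<^bsub>H\<^esub> n = \<one>\<^bsub>H\<^esub>}"

end

theory Submission
  imports Defs
begin


lemma grp_coprime_one:
  assumes "group H" "y \<in> carrier H" "y [^]\<^bsub>H\<^esub> (a::nat) = \<one>\<^bsub>H\<^esub>" "y [^]\<^bsub>H\<^esub> (b::nat) = \<one>\<^bsub>H\<^esub>" "coprime a b"
  shows "y = \<one>\<^bsub>H\<^esub>"
proof -
  interpret group H by fact
  have "group.ord H y dvd a" "group.ord H y dvd b" using assms pow_eq_id by auto
  then have "is_unit (group.ord H y)" using assms(5) coprime_common_divisor by blast
  then show ?thesis using ord_eq_1 assms(2) by simp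
qed

lemma prod_pow:
  assumes "\<And>i. i \<in> I \<Longrightarrow> group (G i)" "x \<in> carrier (product_group I G)"
  shows "x [^]\<^bsub>product_group I G\<^esub> (n::nat) = (\<lambda>i\<in>I. x i [^]\<^bsub>G i\<^esub> n)"
proof (induction n)
  case 0
  then show ?case by simp
next
  case (Suc n)
  then show ?case by (auto intro!: restrict_ext)
qed

lemma prod_comm:
  assumes "\<And>i. i \<in> I \<Longrightarrow> comm_group (G i)"
  shows "comm_group (product_group I G)"
proof (rule group.group_comm_groupI)
  show "group (product_group I G)" using assms by (simp add: comm_group.axioms(2))
  fix x y assume "x \<in> carrier (product_group I G)" "y \<in> carrier (product_group I G)"
  then show "x \<otimes>\<^bsub>product_group I G\<^esub> y = y \<otimes>\<^bsub>product_group I G\<^esub> x"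
    using assms by (auto intro!: restrict_ext simp: comm_groupE(4) PiE_iff)
qed

lemma (in normal) rcos_pow:
  assumes "h \<in> carrier G"
  shows "(H #> h) [^]\<^bsub>G Mod H\<^esub> (n::nat) = H #> (h [^] n)"
proof (induction n)
  case 0
  then show ?case by (simp add: subset)
next
  case (Suc n)
  then show ?case using assms by (simp add: rcos_sum)
qed

lemma kill_dvd:
  assumes "monoid H" "x \<in> carrier H" "x [^]\<^bsub>H\<^esub> (a::nat) = \<one>\<^bsub>H\<^esub>" "a dvd b"
  shows "x [^]\<^bsub>H\<^esub> b = \<one>\<^bsub>H\<^esub>"
proof -
  obtain c where "b = a * c" using assms(4) by blast
  then show ?thesis using assms by (simp add: monoid.nat_pow_pow[symmetric] monoid.nat_pow_one)
qed



lemma E_facts: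
  assumes Tp: "\<And>p::nat. Factorial_Ring.prime p \<Longrightarrow>
        comm_group (Tp p) \<and> finite (carrier (Tp p)) \<and>
        (\<forall>x\<in>carrier (Tp p). \<exists>k::nat. x [^]\<^bsub>Tp p\<^esub> (p ^ k) = \<one>\<^bsub>Tp p\<^esub>)"
  shows "\<exists>E::nat\<Rightarrow>nat. \<forall>p. Factorial_Ring.prime p \<longrightarrow> (\<exists>M. E p = p ^ M) \<and>
      (\<forall>x\<in>carrier (Tp p). x [^]\<^bsub>Tp p\<^esub> E p = \<one>\<^bsub>Tp p\<^esub>)"
proof -
  define K where "K p x = (SOME k::nat. x [^]\<^bsub>Tp p\<^esub> (p^k) = \<one>\<^bsub>Tp p\<^esub>)" for p x
  define E where "E p = p ^ Max (K p ` carrier (Tp p))" for p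
  have "(\<exists>M. E p = p ^ M) \<and> (\<forall>x\<in>carrier (Tp p). x [^]\<^bsub>Tp p\<^esub> E p = \<one>\<^bsub>Tp p\<^esub>)"
    if p: "Factorial_Ring.prime p" for p
  proof -
    have fin: "finite (carrier (Tp p))" and grp: "group (Tp p)" using Tp[OF p] comm_group.axioms(2) by auto
    have "x [^]\<^bsub>Tp p\<^esub> E p = \<one>\<^bsub>Tp p\<^esub>" if x: "x \<in> carrier (Tp p)" for x
    proof -
      have k: "x [^]\<^bsub>Tp p\<^esub> (p^K p x) = \<one>\<^bsub>Tp p\<^esub>"
        unfolding K_def using Tp[OF p] x by (metis (mono_tags, lifting) someI_ex)
      have "K p x \<le> Max (K p ` carrier (Tp p))" using fin x by auto
      then have "p ^ K p x dvd E p" unfolding E_def by (simp add: le_imp_power_dvd)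
      then show ?thesis using kill_dvd[OF group.is_monoid[OF grp] x k] by blast
    qed
    then show ?thesis unfolding E_def by blast
  qed
  then show ?thesis by blast
qed



lemma pkill_gen:
  assumes "group H" "x \<in> carrier H" "x [^]\<^bsub>H\<^esub> ((p::nat)^M) = \<one>\<^bsub>H\<^esub>" "Factorial_Ring.prime p"
    "x [^]\<^bsub>H\<^esub> (m::nat) = \<one>\<^bsub>H\<^esub>" "\<not> p dvd m"
  shows "x = \<one>\<^bsub>H\<^esub>"
proof -
  have "coprime p m" using prime_imp_coprime[OF assms(4,6)] .
  then have cop: "coprime (p^M) m" by simp
  show ?thesis by (rule grp_coprime_one[OF assms(1,2,3,5) cop])
qed

lemma root_gen:
  fixes H (structure)
  assumes "comm_group H" "finite (carrier H)" "Factorial_Ring.prime p"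
    "\<forall>x\<in>carrier H. x [^]\<^bsub>H\<^esub> ((p::nat)^M) = \<one>\<^bsub>H\<^esub>" "\<not> p dvd N" "a \<in> carrier H"
  shows "\<exists>y\<in>carrier H. y [^]\<^bsub>H\<^esub> (N::nat) = a"
proof -
  interpret comm_group H by fact
  have inj: "inj_on (\<lambda>y. y [^] N) (carrier H)"
  proof (rule inj_onI)
    fix y y' assume y: "y \<in> carrier H" and y': "y' \<in> carrier H" and e: "y [^] N = y' [^] N"
    have "(y \<otimes> inv y') [^] N = y [^] N \<otimes> inv y' [^] N" using y y' by (simp add: nat_pow_distrib)
    also have "\<dots> = y' [^] N \<otimes> inv y' [^] N" using e by simp
    also have "\<dots> = (y' \<otimes> inv y') [^] N" using y' by (simp only: nat_pow_distrib inv_closed)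
    also have "\<dots> = \<one>" using y' by simp
    finally have "(y \<otimes> inv y') [^] N = \<one>" .
    moreover have c: "y \<otimes> inv y' \<in> carrier H" using y y' by simp
    moreover have "(y \<otimes> inv y') [^] (p^M) = \<one>" using assms(4) c by blast
    ultimately have "y \<otimes> inv y' = \<one>" using pkill_gen[OF is_group c _ assms(3) _ assms(5)] by blast
    moreover have "y = (y \<otimes> inv y') \<otimes> y'" using y y' by (simp add: m_assoc)
    ultimately show "y = y'" using y' by simp
  qed
  moreover have "(\<lambda>y. y [^] N) ` carrier H \<subseteq> carrier H" by auto
  ultimately have "(\<lambda>y. y [^] N) ` carrier H = carrier H"
    using endo_inj_surj[OF assms(2)] by blast
  then have "a \<in> (\<lambda>y. y [^] N) ` carrier H" using assms(6) by simp
  then obtain y where "y \<in> carrier H" "a = y [^] N" by blast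
  then show ?thesis by blast
qed



theorem mainTheorem13:
  fixes Tp :: "nat \<Rightarrow> ('a, 'b) monoid_scheme"
    and G :: "(nat \<Rightarrow> 'a) set"
    and \<gamma> :: "(nat \<Rightarrow> 'a) \<Rightarrow> (nat \<Rightarrow> 'a)"
  assumes Tp: "\<And>p::nat. Factorial_Ring.prime p \<Longrightarrow>
        comm_group (Tp p) \<and> finite (carrier (Tp p)) \<and>
        (\<forall>x\<in>carrier (Tp p). \<exists>k::nat. x [^]\<^bsub>Tp p\<^esub> (p ^ k) = \<one>\<^bsub>Tp p\<^esub>)"
    and sub: "subgroup G (product_group {p::nat. Factorial_Ring.prime p} Tp)"
    and TG: "carrier (sum_group {p::nat. Factorial_Ring.prime p} Tp) \<subseteq> G"
    and pure: "\<And>(n::nat) x. n > 0 \<Longrightarrow> x \<in> G \<Longrightarrow>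
        (\<exists>y\<in>carrier (product_group {p::nat. Factorial_Ring.prime p} Tp).
            y [^]\<^bsub>product_group {p::nat. Factorial_Ring.prime p} Tp\<^esub> n = x) \<Longrightarrow>
        (\<exists>y\<in>G. y [^]\<^bsub>product_group {p::nat. Factorial_Ring.prime p} Tp\<^esub> n = x)"
    and div: "divisible_group
        (subgroup_generated (product_group {p::nat. Factorial_Ring.prime p} Tp) G
           Mod carrier (sum_group {p::nat. Factorial_Ring.prime p} Tp))"
    and hom: "\<gamma> \<in> hom (subgroup_generated (product_group {p::nat. Factorial_Ring.prime p} Tp) G)
                     (subgroup_generated (product_group {p::nat. Factorial_Ring.prime p} Tp) G)"
  shows "torsion_part (product_group {p::nat. Factorial_Ring.prime p} Tp) (\<gamma> ` G)
           = \<gamma> ` carrier (sum_group {p::nat. Factorial_Ring.prime p} Tp)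
       \<and> divisible_group
           (subgroup_generated (product_group {p::nat. Factorial_Ring.prime p} Tp) (\<gamma> ` G)
              Mod torsion_part (product_group {p::nat. Factorial_Ring.prime p} Tp) (\<gamma> ` G))"
proof -
  let ?I = "{p::nat. Factorial_Ring.prime p}"
  let ?PG = "product_group ?I Tp"
  let ?S = "carrier (sum_group ?I Tp)"
  let ?GG = "subgroup_generated ?PG G"
  have grpT: "\<And>i. i \<in> ?I \<Longrightarrow> group (Tp i)" using Tp comm_group.axioms(2) by blast
  have cgT: "\<And>i. i \<in> ?I \<Longrightarrow> comm_group (Tp i)" using Tp by blast
  have grp_PG: "group ?PG" by (rule product_group[OF grpT])
  have cPG: "comm_group ?PG" using prod_comm cgT by blast
  have S_eq: "?S = {x \<in> \<Pi>\<^sub>E i\<in>?I. carrier (Tp i). finite {i \<in> ?I. x i \<noteq> \<one>\<^bsub>Tp i\<^esub>}}"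
    using carrier_sum_group grpT by blast
  have subS: "subgroup ?S ?PG" unfolding S_eq by (rule subgroup_sum_group[OF grpT])
  have G_carr: "carrier ?GG = G" using subgroup.carrier_subgroup_generated_subgroup[OF sub] .
  have gGG: "group ?GG" using group.group_subgroup_generated[OF grp_PG] .
  have GPG: "G \<subseteq> carrier ?PG" using subgroup.subset[OF sub] .
  have gam_G: "\<And>g. g \<in> G \<Longrightarrow> \<gamma> g \<in> G" using hom_in_carrier[OF hom] G_carr by blast
  have gam_mult: "\<And>a b. a \<in> G \<Longrightarrow> b \<in> G \<Longrightarrow> \<gamma> (a \<otimes>\<^bsub>?PG\<^esub> b) = \<gamma> a \<otimes>\<^bsub>?PG\<^esub> \<gamma> b"
    using hom_mult[OF hom] G_carr by simp
  have gam_pow: "\<And>a k. a \<in> G \<Longrightarrow> \<gamma> (a [^]\<^bsub>?PG\<^esub> (k::nat)) = \<gamma> a [^]\<^bsub>?PG\<^esub> k"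
  proof -
    fix a and k :: nat assume a: "a \<in> G"
    have "\<gamma> (a [^]\<^bsub>?GG\<^esub> k) = \<gamma> a [^]\<^bsub>?GG\<^esub> k"
      by (rule hom_nat_pow[OF hom _ gGG gGG]) (simp add: G_carr a)
    then show "\<gamma> (a [^]\<^bsub>?PG\<^esub> k) = \<gamma> a [^]\<^bsub>?PG\<^esub> k" by (simp add: pow_subgroup_generated)
  qed
  have gam_one: "\<gamma> \<one>\<^bsub>?PG\<^esub> = \<one>\<^bsub>?PG\<^esub>"
    using hom_one[OF hom gGG gGG] by simp
  obtain E :: "nat \<Rightarrow> nat" where E: "\<And>p. Factorial_Ring.prime p \<Longrightarrow> (\<exists>M. E p = p ^ M) \<and>
      (\<forall>x\<in>carrier (Tp p). x [^]\<^bsub>Tp p\<^esub> E p = \<one>\<^bsub>Tp p\<^esub>)"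
    using E_facts[OF Tp] by blast
  have pkill: "\<And>p x m. Factorial_Ring.prime p \<Longrightarrow> x \<in> carrier (Tp p) \<Longrightarrow> x [^]\<^bsub>Tp p\<^esub> (m::nat) = \<one>\<^bsub>Tp p\<^esub>
      \<Longrightarrow> \<not> p dvd m \<Longrightarrow> x = \<one>\<^bsub>Tp p\<^esub>"
  proof -
    fix p x m assume a: "Factorial_Ring.prime p" "x \<in> carrier (Tp p)" "x [^]\<^bsub>Tp p\<^esub> (m::nat) = \<one>\<^bsub>Tp p\<^esub>" "\<not> p dvd m"
    obtain M where "E p = p ^ M" using E a(1) by blast
    then have k: "x [^]\<^bsub>Tp p\<^esub> (p^M) = \<one>\<^bsub>Tp p\<^esub>" using E[OF a(1)] a(2) by auto
    have g: "group (Tp p)" using grpT a(1) by simp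
    show "x = \<one>\<^bsub>Tp p\<^esub>" by (rule pkill_gen[OF g a(2) k a(1) a(3) a(4)])
  qed
  have root: "\<And>p a N. Factorial_Ring.prime p \<Longrightarrow> a \<in> carrier (Tp p) \<Longrightarrow> \<not> p dvd N
      \<Longrightarrow> \<exists>y\<in>carrier (Tp p). y [^]\<^bsub>Tp p\<^esub> (N::nat) = a"
  proof -
    fix p a N assume a: "Factorial_Ring.prime p" "a \<in> carrier (Tp p)" "\<not> p dvd (N::nat)"
    obtain M where "E p = p ^ M" using E a(1) by blast
    then have k: "\<forall>x\<in>carrier (Tp p). x [^]\<^bsub>Tp p\<^esub> (p^M) = \<one>\<^bsub>Tp p\<^esub>" using E[OF a(1)] by auto
    have g: "comm_group (Tp p)" "finite (carrier (Tp p))" using Tp[OF a(1)] by auto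
    show "\<exists>y\<in>carrier (Tp p). y [^]\<^bsub>Tp p\<^esub> (N::nat) = a" by (rule root_gen[OF g a(1) k a(3) a(2)])
  qed
  have ppow: "\<And>x k. x \<in> carrier ?PG \<Longrightarrow> x [^]\<^bsub>?PG\<^esub> (k::nat) = (\<lambda>i\<in>?I. x i [^]\<^bsub>Tp i\<^esub> k)"
    using prod_pow grpT by blast
  have E_pos: "\<And>p. p \<in> ?I \<Longrightarrow> E p > 0"
    using E by (metis mem_Collect_eq not_prime_0 gr0I power_eq_0_iff)
  have comp1: "\<And>a k i. a \<in> carrier ?PG \<Longrightarrow> a [^]\<^bsub>?PG\<^esub> (k::nat) = \<one>\<^bsub>?PG\<^esub> \<Longrightarrow> i \<in> ?I
      \<Longrightarrow> a i [^]\<^bsub>Tp i\<^esub> k = \<one>\<^bsub>Tp i\<^esub>"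
  proof -
    fix a k i assume a: "a \<in> carrier ?PG" "a [^]\<^bsub>?PG\<^esub> (k::nat) = \<one>\<^bsub>?PG\<^esub>" "i \<in> ?I"
    have "(a [^]\<^bsub>?PG\<^esub> k) i = \<one>\<^bsub>?PG\<^esub> i" using a(2) by simp
    then show "a i [^]\<^bsub>Tp i\<^esub> k = \<one>\<^bsub>Tp i\<^esub>" using ppow[OF a(1)] a(3) by simp
  qed
  have sub1: "torsion_part ?PG (\<gamma> ` G) \<subseteq> \<gamma> ` ?S"
  proof
    fix x assume "x \<in> torsion_part ?PG (\<gamma> ` G)"
    then obtain g n where g: "g \<in> G" "x = \<gamma> g" and n: "n > 0" "x [^]\<^bsub>?PG\<^esub> (n::nat) = \<one>\<^bsub>?PG\<^esub>"
      unfolding torsion_part_def by blast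
    have gPi: "g \<in> carrier ?PG" using g GPG by blast
    have xG: "x \<in> G" using g gam_G by blast
    have xPi: "x \<in> carrier ?PG" using xG GPG by blast
    define P where "P = {p \<in> ?I. p dvd n}"
    have finP: "finite P" unfolding P_def using n(1)
      by (auto intro: finite_subset[of _ "{..n}"] dest: dvd_imp_le)
    define N where "N = (\<Prod>p\<in>P. E p)"
    have Npos: "N > 0" unfolding N_def by (rule prod_pos) (use E_pos P_def in auto)
    have killP: "\<And>p y. p \<in> P \<Longrightarrow> y \<in> carrier (Tp p) \<Longrightarrow> y [^]\<^bsub>Tp p\<^esub> N = \<one>\<^bsub>Tp p\<^esub>"
    proof -
      fix p y assume p: "p \<in> P" and y: "y \<in> carrier (Tp p)"
      have pI: "p \<in> ?I" using p P_def by blast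
      have "E p dvd N" unfolding N_def using finP p by (simp add: dvd_prodI)
      then show "y [^]\<^bsub>Tp p\<^esub> N = \<one>\<^bsub>Tp p\<^esub>"
        using kill_dvd[of "Tp p" y "E p" N] E pI y grpT[OF pI] group.is_monoid by auto
    qed
    have ndvd: "\<And>q. q \<in> ?I \<Longrightarrow> q \<notin> P \<Longrightarrow> \<not> q dvd N"
    proof
      fix q assume q: "q \<in> ?I" "q \<notin> P" "q dvd N"
      then obtain p where p: "p \<in> P" "q dvd E p" unfolding N_def using prime_dvd_prod_iff finP
        by (metis mem_Collect_eq)
      have pI: "p \<in> ?I" using p P_def by blast
      obtain M where "E p = p ^ M" using E pI by blast
      then have "q dvd p" using p q prime_dvd_power by (metis mem_Collect_eq)
      then have "q = p" using primes_dvd_imp_eq q pI by blast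
      then show False using p q by blast
    qed
    have xq: "\<And>q. q \<in> ?I \<Longrightarrow> q \<notin> P \<Longrightarrow> x q = \<one>\<^bsub>Tp q\<^esub>"
    proof -
      fix q assume q: "q \<in> ?I" "q \<notin> P"
      have "x q [^]\<^bsub>Tp q\<^esub> n = \<one>\<^bsub>Tp q\<^esub>" using comp1[OF xPi n(2) q(1)] .
      moreover have "\<not> q dvd n" using q P_def by blast
      moreover have "x q \<in> carrier (Tp q)" using xPi q(1) by (auto simp: PiE_iff)
      ultimately show "x q = \<one>\<^bsub>Tp q\<^esub>" using pkill q(1) by blast
    qed
    define gP where "gP = (\<lambda>i\<in>?I. if i \<in> P then g i else \<one>\<^bsub>Tp i\<^esub>)"
    have gPPi: "gP \<in> carrier ?PG"
      using gPi grpT by (auto simp: gP_def PiE_iff group.is_monoid monoid.one_closed)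
    have gPS: "gP \<in> ?S"
    proof -
      have "{i \<in> ?I. gP i \<noteq> \<one>\<^bsub>Tp i\<^esub>} \<subseteq> P" unfolding gP_def by auto
      then have "finite {i \<in> ?I. gP i \<noteq> \<one>\<^bsub>Tp i\<^esub>}" using finP finite_subset by blast
      then show ?thesis using gPPi S_eq by simp
    qed
    have gPG: "gP \<in> G" using gPS TG by blast
    define g' where "g' = inv\<^bsub>?PG\<^esub> gP \<otimes>\<^bsub>?PG\<^esub> g"
    have g'G: "g' \<in> G" unfolding g'_def by (intro subgroup.m_closed[OF sub] subgroup.m_inv_closed[OF sub] gPG g(1))
    have g'Pi: "g' \<in> carrier ?PG" using g'G GPG by blast
    have g_eq: "g = gP \<otimes>\<^bsub>?PG\<^esub> g'"
    proof -
      have mPG: "monoid ?PG" using group.is_monoid[OF grp_PG] .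
      have gi: "inv\<^bsub>?PG\<^esub> gP \<in> carrier ?PG" using group.inv_closed[OF grp_PG gPPi] .
      have "gP \<otimes>\<^bsub>?PG\<^esub> g' = (gP \<otimes>\<^bsub>?PG\<^esub> inv\<^bsub>?PG\<^esub> gP) \<otimes>\<^bsub>?PG\<^esub> g"
        unfolding g'_def by (rule monoid.m_assoc[OF mPG gPPi gi gPi, symmetric])
      also have "\<dots> = g" by (simp only: group.r_inv[OF grp_PG gPPi] monoid.l_one[OF mPG gPi])
      finally show ?thesis by simp
    qed
    have gPE: "gP \<in> (\<Pi>\<^sub>E i\<in>?I. carrier (Tp i))" using gPPi by simp
    have invg: "inv\<^bsub>?PG\<^esub> gP = (\<lambda>i\<in>?I. inv\<^bsub>Tp i\<^esub> gP i)"
      by (rule inv_product_group[OF gPE grpT])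
    have g'_comp: "\<And>i. i \<in> ?I \<Longrightarrow> g' i = (if i \<in> P then \<one>\<^bsub>Tp i\<^esub> else g i)"
    proof -
      fix i assume i: "i \<in> ?I"
      have gr: "group (Tp i)" using grpT[OF i] .
      have e: "g' i = inv\<^bsub>Tp i\<^esub> gP i \<otimes>\<^bsub>Tp i\<^esub> g i" unfolding g'_def invg using i by simp
      have gi: "g i \<in> carrier (Tp i)" using gPi i by (auto simp: PiE_iff)
      show "g' i = (if i \<in> P then \<one>\<^bsub>Tp i\<^esub> else g i)"
      proof (cases "i \<in> P")
        case True
        then have "gP i = g i" unfolding gP_def using i by simp
        then show ?thesis using e True group.l_inv[OF gr gi] by simp
      next
        case False
        then have "gP i = \<one>\<^bsub>Tp i\<^esub>" unfolding gP_def using i by simp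
        then show ?thesis using e False monoid.inv_one[OF group.is_monoid[OF gr]] monoid.l_one[OF group.is_monoid[OF gr] gi] by simp
      qed
    qed
    define z where "z = (\<lambda>i\<in>?I. if i \<in> P then \<one>\<^bsub>Tp i\<^esub> else (SOME y. y \<in> carrier (Tp i) \<and> y [^]\<^bsub>Tp i\<^esub> N = g i))"
    have z_i: "\<And>i. i \<in> ?I \<Longrightarrow> i \<notin> P \<Longrightarrow> z i \<in> carrier (Tp i) \<and> z i [^]\<^bsub>Tp i\<^esub> N = g i"
    proof -
      fix i assume i: "i \<in> ?I" "i \<notin> P"
      have "\<exists>y. y \<in> carrier (Tp i) \<and> y [^]\<^bsub>Tp i\<^esub> N = g i"
        using root[of i "g i" N] ndvd[OF i] gPi i by (auto simp: PiE_iff)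
      then have "(SOME y. y \<in> carrier (Tp i) \<and> y [^]\<^bsub>Tp i\<^esub> N = g i) \<in> carrier (Tp i) \<and> (SOME y. y \<in> carrier (Tp i) \<and> y [^]\<^bsub>Tp i\<^esub> N = g i) [^]\<^bsub>Tp i\<^esub> N = g i"
        by (rule someI_ex)
      then show "z i \<in> carrier (Tp i) \<and> z i [^]\<^bsub>Tp i\<^esub> N = g i" unfolding z_def using i by simp
    qed
    have zPi: "z \<in> carrier ?PG"
      using z_i grpT by (auto simp: z_def PiE_iff group.is_monoid monoid.one_closed)
    have zpow: "z [^]\<^bsub>?PG\<^esub> N = g'"
    proof (rule PiE_ext)
      have "z [^]\<^bsub>?PG\<^esub> N \<in> carrier ?PG" by (rule monoid.nat_pow_closed[OF group.is_monoid[OF grp_PG] zPi])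
      then show "z [^]\<^bsub>?PG\<^esub> N \<in> (\<Pi>\<^sub>E i\<in>?I. carrier (Tp i))" by simp
      have "g' \<in> carrier ?PG" using g'Pi .
      then show "g' \<in> (\<Pi>\<^sub>E i\<in>?I. carrier (Tp i))" by simp
      fix i assume i: "i \<in> ?I"
      show "(z [^]\<^bsub>?PG\<^esub> N) i = g' i"
      proof (cases "i \<in> P")
        case True
        then show ?thesis using ppow[OF zPi] i g'_comp[OF i] grpT[OF i]
          by (simp add: z_def group.is_monoid monoid.nat_pow_one)
      next
        case False
        then show ?thesis using ppow[OF zPi] i g'_comp[OF i] z_i[OF i] by simp
      qed
    qed
    obtain z2 where z2: "z2 \<in> G" "z2 [^]\<^bsub>?PG\<^esub> N = g'" using pure[of N g'] Npos g'G zPi zpow by blast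
    define w where "w = \<gamma> g'"
    have wPi: "w \<in> carrier ?PG" using gam_G g'G GPG w_def by blast
    have z2Pi: "\<gamma> z2 \<in> carrier ?PG" using gam_G z2 GPG by blast
    have ggPPi: "\<gamma> gP \<in> carrier ?PG" using gam_G gPG GPG by blast
    have w_eq: "w = \<gamma> z2 [^]\<^bsub>?PG\<^esub> N" unfolding w_def using gam_pow[OF z2(1), of N] z2(2) by simp
    have x_eq: "x = \<gamma> gP \<otimes>\<^bsub>?PG\<^esub> w" using g_eq gam_mult g gPG g'G w_def by simp
    have gPpow: "gP [^]\<^bsub>?PG\<^esub> N = \<one>\<^bsub>?PG\<^esub>"
    proof (rule PiE_ext)
      have "gP [^]\<^bsub>?PG\<^esub> N \<in> carrier ?PG" by (rule monoid.nat_pow_closed[OF group.is_monoid[OF grp_PG] gPPi])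
      then show "gP [^]\<^bsub>?PG\<^esub> N \<in> (\<Pi>\<^sub>E i\<in>?I. carrier (Tp i))" by simp
      have "\<one>\<^bsub>?PG\<^esub> \<in> carrier ?PG" by (rule monoid.one_closed[OF group.is_monoid[OF grp_PG]])
      then show "\<one>\<^bsub>?PG\<^esub> \<in> (\<Pi>\<^sub>E i\<in>?I. carrier (Tp i))" by simp
      fix i assume i: "i \<in> ?I"
      show "(gP [^]\<^bsub>?PG\<^esub> N) i = \<one>\<^bsub>?PG\<^esub> i"
      proof (cases "i \<in> P")
        case True
        then show ?thesis using ppow[OF gPPi] i killP gPi by (auto simp: gP_def PiE_iff)
      next
        case False
        then show ?thesis using ppow[OF gPPi] i grpT[OF i]
          by (simp add: gP_def group.is_monoid monoid.nat_pow_one)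
      qed
    qed
    have ggPpow: "\<gamma> gP [^]\<^bsub>?PG\<^esub> N = \<one>\<^bsub>?PG\<^esub>" using gam_pow gam_one gPpow gPG by metis
    have w1: "w = \<one>\<^bsub>?PG\<^esub>"
    proof (rule PiE_ext)
      have "w \<in> carrier ?PG" using wPi .
      then show "w \<in> (\<Pi>\<^sub>E i\<in>?I. carrier (Tp i))" by simp
      have "\<one>\<^bsub>?PG\<^esub> \<in> carrier ?PG" by (rule monoid.one_closed[OF group.is_monoid[OF grp_PG]])
      then show "\<one>\<^bsub>?PG\<^esub> \<in> (\<Pi>\<^sub>E i\<in>?I. carrier (Tp i))" by simp
      fix i assume i: "i \<in> ?I"
      have wi: "w i \<in> carrier (Tp i)" using wPi i by (auto simp: PiE_iff)
      show "w i = \<one>\<^bsub>?PG\<^esub> i"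
      proof (cases "i \<in> P")
        case True
        have "\<gamma> z2 i \<in> carrier (Tp i)" using z2Pi i by (auto simp: PiE_iff)
        then show ?thesis using w_eq ppow[OF z2Pi] i killP[OF True] by simp
      next
        case False
        have "\<gamma> gP i \<in> carrier (Tp i)" using ggPPi i by (auto simp: PiE_iff)
        then have a1: "\<gamma> gP i = \<one>\<^bsub>Tp i\<^esub>" using pkill comp1[OF ggPPi ggPpow i] ndvd[OF i False] i by blast
        have "x i = \<gamma> gP i \<otimes>\<^bsub>Tp i\<^esub> w i" using x_eq i by simp
        then show ?thesis using xq[OF i False] a1 wi grpT[OF i] i by (simp add: group.is_monoid monoid.l_one)
      qed
    qed
    have "x = \<gamma> gP \<otimes>\<^bsub>?PG\<^esub> \<one>\<^bsub>?PG\<^esub>" using x_eq w1 by (simp only:)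
    also have "\<dots> = \<gamma> gP" by (rule monoid.r_one[OF group.is_monoid[OF grp_PG] ggPPi])
    finally have "x = \<gamma> gP" .
    then show "x \<in> \<gamma> ` ?S" using gPS by blast
  qed
  have sub2: "\<gamma> ` ?S \<subseteq> torsion_part ?PG (\<gamma> ` G)"
  proof
    fix y assume "y \<in> \<gamma> ` ?S"
    then obtain t where t: "t \<in> ?S" "y = \<gamma> t" by blast
    have tG: "t \<in> G" using t TG by blast
    have tPi: "t \<in> carrier ?PG" using tG GPG by blast
    define F where "F = {i \<in> ?I. t i \<noteq> \<one>\<^bsub>Tp i\<^esub>}"
    have fin: "finite F" using t(1) unfolding S_eq F_def by blast
    define N where "N = (\<Prod>i\<in>F. E i)"
    have Npos: "N > 0" unfolding N_def by (rule prod_pos) (use E_pos F_def in auto)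
    have tN: "t [^]\<^bsub>?PG\<^esub> N = \<one>\<^bsub>?PG\<^esub>"
    proof (rule PiE_ext)
      have "t [^]\<^bsub>?PG\<^esub> N \<in> carrier ?PG" by (rule monoid.nat_pow_closed[OF group.is_monoid[OF grp_PG] tPi])
      then show "t [^]\<^bsub>?PG\<^esub> N \<in> (\<Pi>\<^sub>E i\<in>?I. carrier (Tp i))" by simp
      have "\<one>\<^bsub>?PG\<^esub> \<in> carrier ?PG" by (rule monoid.one_closed[OF group.is_monoid[OF grp_PG]])
      then show "\<one>\<^bsub>?PG\<^esub> \<in> (\<Pi>\<^sub>E i\<in>?I. carrier (Tp i))" by simp
      fix i assume i: "i \<in> ?I"
      have ti: "t i \<in> carrier (Tp i)" using tPi i by (auto simp: PiE_iff)
      have mi: "monoid (Tp i)" using group.is_monoid[OF grpT[OF i]] .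
      have "t i [^]\<^bsub>Tp i\<^esub> N = \<one>\<^bsub>Tp i\<^esub>"
      proof (cases "i \<in> F")
        case True
        then have "E i dvd N" unfolding N_def using fin by (simp add: dvd_prodI)
        moreover have "t i [^]\<^bsub>Tp i\<^esub> E i = \<one>\<^bsub>Tp i\<^esub>" using E i ti by auto
        ultimately show ?thesis using kill_dvd[OF mi ti] by blast
      next
        case False
        then have "t i = \<one>\<^bsub>Tp i\<^esub>" using i F_def by auto
        then show ?thesis using monoid.nat_pow_one[OF mi] by simp
      qed
      then show "(t [^]\<^bsub>?PG\<^esub> N) i = \<one>\<^bsub>?PG\<^esub> i" using ppow[OF tPi] i by simp
    qed
    have "y [^]\<^bsub>?PG\<^esub> N = \<one>\<^bsub>?PG\<^esub>" using t(2) gam_pow[OF tG, of N] tN gam_one by simp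
    moreover have "y \<in> \<gamma> ` G" using t tG by blast
    ultimately show "y \<in> torsion_part ?PG (\<gamma> ` G)" unfolding torsion_part_def using Npos by blast
  qed
  have TX: "torsion_part ?PG (\<gamma> ` G) = \<gamma> ` ?S" using sub1 sub2 by blast
  have part2: "divisible_group (subgroup_generated ?PG (\<gamma> ` G) Mod \<gamma> ` ?S)"
  proof -
    let ?H = "subgroup_generated ?PG (\<gamma> ` G)"
    let ?TX = "\<gamma> ` ?S"
    have ghom: "group_hom ?GG ?GG \<gamma>" using hom gGG by (simp add: group_hom_def group_hom_axioms_def)
    have subX_GG: "subgroup (\<gamma> ` G) ?GG" using group_hom.img_is_subgroup[OF ghom] G_carr by simp
    have subX: "subgroup (\<gamma> ` G) ?PG" using group.subgroup_subgroup_generated_iff[OF grp_PG] subX_GG by blast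
    have S_GG: "subgroup ?S ?GG" using group.subgroup_subgroup_generated_iff[OF grp_PG] subS TG G_carr by blast
    have subTX_GG: "subgroup ?TX ?GG" using group_hom.subgroup_img_is_subgroup[OF ghom S_GG] .
    have subTX_PG: "subgroup ?TX ?PG" using group.subgroup_subgroup_generated_iff[OF grp_PG] subTX_GG by blast
    have HX: "carrier ?H = \<gamma> ` G" using subgroup.carrier_subgroup_generated_subgroup[OF subX] .
    have grpH: "group ?H" using group.group_subgroup_generated[OF grp_PG] .
    have subTX: "subgroup ?TX ?H" using group.subgroup_subgroup_generated_iff[OF grp_PG] subTX_PG HX TG by blast
    have cH: "comm_group ?H" using group.abelian_subgroup_generated[OF grp_PG cPG] .
    have nTX: "normal ?TX ?H" using comm_group.subgroup_imp_normal[OF cH subTX] .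
    have cGG: "comm_group ?GG" using group.abelian_subgroup_generated[OF grp_PG cPG] .
    have nS: "normal ?S ?GG" using comm_group.subgroup_imp_normal[OF cGG S_GG] .
    show ?thesis unfolding divisible_group_def
    proof (intro ballI allI impI)
      fix C and m :: nat assume C: "C \<in> carrier (?H Mod ?TX)" and m: "m > 0"
      then obtain a where a: "a \<in> \<gamma> ` G" "C = ?TX #>\<^bsub>?H\<^esub> a" unfolding carrier_FactGroup HX by blast
      then obtain g where g: "g \<in> G" "a = \<gamma> g" by blast
      have "?S #>\<^bsub>?GG\<^esub> g \<in> carrier (?GG Mod ?S)" unfolding carrier_FactGroup G_carr using g by blast
      then obtain D where D: "D \<in> carrier (?GG Mod ?S)" "D [^]\<^bsub>?GG Mod ?S\<^esub> m = ?S #>\<^bsub>?GG\<^esub> g"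
        using div m unfolding divisible_group_def by blast
      then obtain h where h: "h \<in> G" "D = ?S #>\<^bsub>?GG\<^esub> h" unfolding carrier_FactGroup G_carr by blast
      have hGG: "h \<in> carrier ?GG" using h G_carr by simp
      have "?S #>\<^bsub>?GG\<^esub> (h [^]\<^bsub>?GG\<^esub> m) = ?S #>\<^bsub>?GG\<^esub> g"
        using D(2) h(2) normal.rcos_pow[OF nS hGG, of m] by simp
      moreover have "g \<in> ?S #>\<^bsub>?GG\<^esub> g" using group.rcos_self[OF gGG _ S_GG] g G_carr by simp
      ultimately have "g \<in> ?S #>\<^bsub>?GG\<^esub> (h [^]\<^bsub>?PG\<^esub> m)" by (simp add: pow_subgroup_generated)
      then obtain t where t: "t \<in> ?S" "g = t \<otimes>\<^bsub>?PG\<^esub> h [^]\<^bsub>?PG\<^esub> m"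
        unfolding r_coset_def by auto
      have hmGG: "h [^]\<^bsub>?GG\<^esub> m \<in> carrier ?GG" using monoid.nat_pow_closed[OF group.is_monoid[OF gGG] hGG] .
      then have hm: "h [^]\<^bsub>?PG\<^esub> m \<in> G" using G_carr by (simp add: pow_subgroup_generated)
      have tG: "t \<in> G" using t TG by blast
      have ga: "\<gamma> g = \<gamma> t \<otimes>\<^bsub>?PG\<^esub> (\<gamma> h) [^]\<^bsub>?PG\<^esub> m"
        using t(2) gam_mult[OF tG hm] gam_pow[OF h(1), of m] by simp
      have ghH: "\<gamma> h \<in> carrier ?H" using HX h gam_G by blast
      show "\<exists>y\<in>carrier (?H Mod ?TX). y [^]\<^bsub>?H Mod ?TX\<^esub> m = C"
      proof (rule bexI)
        show "?TX #>\<^bsub>?H\<^esub> \<gamma> h \<in> carrier (?H Mod ?TX)" unfolding carrier_FactGroup using ghH by blast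
        have "(?TX #>\<^bsub>?H\<^esub> \<gamma> h) [^]\<^bsub>?H Mod ?TX\<^esub> m = ?TX #>\<^bsub>?H\<^esub> (\<gamma> h [^]\<^bsub>?H\<^esub> m)"
          using normal.rcos_pow[OF nTX ghH] .
        also have "\<dots> = ?TX #>\<^bsub>?H\<^esub> \<gamma> g"
        proof (rule group.repr_independence[OF grpH _ _ subTX])
          show "\<gamma> h [^]\<^bsub>?H\<^esub> m \<in> carrier ?H" using monoid.nat_pow_closed[OF group.is_monoid[OF grpH] ghH] .
          have "\<gamma> t \<in> ?TX" using t by blast
          then show "\<gamma> g \<in> ?TX #>\<^bsub>?H\<^esub> (\<gamma> h [^]\<^bsub>?H\<^esub> m)"
            unfolding r_coset_def using ga by (auto simp: pow_subgroup_generated)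
        qed
        finally show "(?TX #>\<^bsub>?H\<^esub> \<gamma> h) [^]\<^bsub>?H Mod ?TX\<^esub> m = C" using a g by simp
      qed
    qed
  qed
  show ?thesis using TX part2 by simp
qed

end
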